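(* Let $m\geq 1$ and let $f=a_0+a_1z+\cdots+a_mz^m\in\mathbb{Z}[z]$ with $a_m\neq 0$. Suppose there exist a prime $p$ and coprime positive integers $k$ and $j$ with $1\leq j\leq m$ such that $p\nmid a_j$, $p^k\mid a_i$ for all $i=0,\ldots,j-1$, and $p^{k+1}\nmid a_0$. Then for every factorization $f=gh$ with $g,h\in\mathbb{Z}[z]$ one has $\min\{\deg g,\deg h\}\leq m-j$ (more precisely, one of $g,h$ has degree $0$ or degree at most $m-j$). In particular, if $f$ is primitive and $j=m$, then $f$ is irreducible in $\mathbb{Z}[z]$; and if $f$ is primitive, $j=m-1$, and $f$ has no root in $\mathbb{Q}$, then $f$ is irreducible in $\mathbb{Z}[z]$.
   Context: A polynomial in $\mathbb{Z}[z]$ is primitive if the greatest common divisor of its coefficients is $1$. *)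

theory Defs
  imports "HOL-Computational_Algebra.Computational_Algebra"
begin

end

theory Submission
  imports Defs
begin

lemma exists_t:
  fixes g :: "int poly" and w :: "nat \<Rightarrow> nat"
  assumes "g \<noteq> 0"
  shows "\<exists>t. coeff g t \<noteq> 0 \<and> (\<forall>i. coeff g i \<noteq> 0 \<longrightarrow> w t \<le> w i)
            \<and> (\<forall>i>t. coeff g i \<noteq> 0 \<longrightarrow> w t < w i)"
proof -
  define S where "S = {i. coeff g i \<noteq> 0}"
  have fS: "finite S" unfolding S_def
    by (rule finite_subset[of _ "{..degree g}"]) (auto intro: le_degree)
  have neS: "S \<noteq> {}" using assms leading_coeff_neq_0[of g] unfolding S_def by blast
  define W where "W = Min (w ` S)"
  define T where "T = {i\<in>S. w i = W}"
  have fT: "finite T" using fS unfolding T_def by auto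
  have "W \<in> w ` S" unfolding W_def using fS neS by (intro Min_in) auto
  then have neT: "T \<noteq> {}" unfolding T_def by auto
  define t where "t = Max T"
  have tT: "t \<in> T" unfolding t_def using fT neT by (rule Max_in)
  have minW: "\<And>i. i \<in> S \<Longrightarrow> W \<le> w i" unfolding W_def using fS by auto
  show ?thesis
  proof (intro exI conjI allI impI)
    show "coeff g t \<noteq> 0" using tT unfolding T_def S_def by auto
    fix i assume "coeff g i \<noteq> 0"
    then show "w t \<le> w i" using tT minW unfolding T_def S_def by auto
  next
    fix i assume i: "t < i" "coeff g i \<noteq> 0"
    have "w i \<noteq> W"
    proof
      assume "w i = W"
      then have "i \<in> T" using i unfolding T_def S_def by auto
      then have "i \<le> t" unfolding t_def using fT by auto
      then show False using i by auto
    qed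
    then show "w t < w i" using tT minW[of i] i unfolding T_def S_def by auto
  qed
qed

lemma part1:
  fixes f g h :: "int poly" and j k :: nat and p :: int
  assumes fgh: "f = g * h" and f0: "f \<noteq> 0"
    and pr: "prime p" and k0: "k > 0" and cop: "coprime k j" and j1: "1 \<le> j"
    and aj: "\<not> p dvd coeff f j"
    and low: "\<forall>i<j. p ^ k dvd coeff f i"
    and a0: "\<not> p ^ (k + 1) dvd coeff f 0"
  shows "j \<le> degree g \<or> j \<le> degree h"
proof -
  have g0: "g \<noteq> 0" and h0: "h \<noteq> 0" using f0 fgh by auto
  have pe: "prime_elem p" using pr by auto
  have pnu: "\<not> is_unit p" using pr by auto
  define v where "v x = multiplicity p (x::int)" for x
  define wg where "wg i = j * v (coeff g i) + k * i" for i
  define wh where "wh i = j * v (coeff h i) + k * i" for i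
  obtain tg where tg1: "coeff g tg \<noteq> 0" and tg2: "\<forall>i. coeff g i \<noteq> 0 \<longrightarrow> wg tg \<le> wg i"
    and tg3: "\<forall>i>tg. coeff g i \<noteq> 0 \<longrightarrow> wg tg < wg i"
    using exists_t[OF g0, of wg] by blast
  obtain th where th1: "coeff h th \<noteq> 0" and th2: "\<forall>i. coeff h i \<noteq> 0 \<longrightarrow> wh th \<le> wh i"
    and th3: "\<forall>i>th. coeff h i \<noteq> 0 \<longrightarrow> wh th < wh i"
    using exists_t[OF h0, of wh] by blast
  have strict: "wg tg + wh th < wg a + wh b"
    if ab: "coeff g a \<noteq> 0" "coeff h b \<noteq> 0" "tg < a \<or> th < b" for a b
  proof -
    consider "tg < a" | "th < b" using ab(3) by blast
    then show ?thesis
    proof cases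
      case 1
      then have "wg tg < wg a" using tg3 ab(1) by blast
      moreover have "wh th \<le> wh b" using th2 ab(2) by blast
      ultimately show ?thesis by linarith
    next
      case 2
      then have "wh th < wh b" using th3 ab(2) by blast
      moreover have "wg tg \<le> wg a" using tg2 ab(1) by blast
      ultimately show ?thesis by linarith
    qed
  qed
  have vmult: "v (x * y) = v x + v y" if "x \<noteq> 0" "y \<noteq> 0" for x y
    unfolding v_def using prime_elem_multiplicity_mult_distrib[OF pe that] .
  have div: "p ^ e dvd coeff g a * coeff h b"
    if "e \<le> v (coeff g a) + v (coeff h b)" for a b e
  proof (cases "coeff g a = 0 \<or> coeff h b = 0")
    case True then show ?thesis by auto
  next
    case False
    then have "e \<le> multiplicity p (coeff g a * coeff h b)"
      using that vmult[of "coeff g a" "coeff h b"] unfolding v_def by auto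
    then show ?thesis by (rule multiplicity_dvd')
  qed
  define n where "n = tg + th"
  define V0 where "V0 = v (coeff g tg) + v (coeff h th)"
  have ndiv: "\<not> p ^ Suc V0 dvd coeff f n"
  proof
    assume H: "p ^ Suc V0 dvd coeff f n"
    have cf: "coeff f n = (\<Sum>a\<le>n. coeff g a * coeff h (n - a))"
      using fgh by (simp add: coeff_mult)
    have "tg \<in> {..n}" unfolding n_def by auto
    then have cf2: "coeff f n = coeff g tg * coeff h th
        + (\<Sum>a\<in>{..n} - {tg}. coeff g a * coeff h (n - a))"
      using cf sum.remove[of "{..n}" tg "\<lambda>a. coeff g a * coeff h (n - a)"]
      by (simp add: n_def)
    have rest: "p ^ Suc V0 dvd (\<Sum>a\<in>{..n} - {tg}. coeff g a * coeff h (n - a))"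
    proof (rule dvd_sum)
      fix a assume a: "a \<in> {..n} - {tg}"
      show "p ^ Suc V0 dvd coeff g a * coeff h (n - a)"
      proof (cases "coeff g a = 0 \<or> coeff h (n - a) = 0")
        case True then show ?thesis by auto
      next
        case False
        have "tg < a \<or> th < n - a" using a unfolding n_def by auto
        then have "wg tg + wh th < wg a + wh (n - a)" using strict False by auto
        moreover have "k * a + k * (n - a) = k * tg + k * th"
          using a unfolding n_def by (simp add: add_mult_distrib2[symmetric])
        ultimately have "j * V0 < j * (v (coeff g a) + v (coeff h (n - a)))"
          unfolding wg_def wh_def V0_def by (simp add: add_mult_distrib2)
        then have "V0 < v (coeff g a) + v (coeff h (n - a))" by simp
        then have "Suc V0 \<le> v (coeff g a) + v (coeff h (n - a))" by simp
        then show ?thesis by (rule div)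
      qed
    qed
    have "p ^ Suc V0 dvd coeff g tg * coeff h th + (\<Sum>a\<in>{..n} - {tg}. coeff g a * coeff h (n - a))
       \<longleftrightarrow> p ^ Suc V0 dvd coeff g tg * coeff h th"
      using rest by (rule dvd_add_left_iff)
    then have "p ^ Suc V0 dvd coeff g tg * coeff h th"
      using H cf2 by simp
    then have "Suc V0 \<le> multiplicity p (coeff g tg * coeff h th)"
      using multiplicity_geI[of "coeff g tg * coeff h th" p "Suc V0"] tg1 th1 pnu by simp
    then show False using vmult[OF tg1 th1] unfolding V0_def v_def by simp
  qed
  have lower: "j * k \<le> wg tg + wh th"
  proof -
    have eq: "wg tg + wh th = j * V0 + k * n"
      unfolding wg_def wh_def V0_def n_def by (simp add: add_mult_distrib2)
    show ?thesis
    proof (cases "j \<le> n")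
      case True
      then have "k * j \<le> k * n" by (rule mult_le_mono2)
      then show ?thesis using eq by (simp add: mult.commute trans_le_add2)
    next
      case False
      then have pk: "p ^ k dvd coeff f n" using low by auto
      have "k \<le> V0"
      proof (rule ccontr)
        assume "\<not> k \<le> V0"
        then have "p ^ Suc V0 dvd p ^ k" by (intro le_imp_power_dvd) simp
        then show False using pk ndiv dvd_trans by blast
      qed
      then have "j * k \<le> j * V0" by (rule mult_le_mono2)
      then show ?thesis using eq by (simp add: trans_le_add1)
    qed
  qed
  have c0: "coeff f 0 = coeff g 0 * coeff h 0" using fgh by (simp add: coeff_mult_0)
  have a00: "coeff f 0 \<noteq> 0" using a0 by auto
  then have b00: "coeff g 0 \<noteq> 0" and c00: "coeff h 0 \<noteq> 0" using c0 by auto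
  have "v (coeff f 0) = k" unfolding v_def
    using multiplicity_eqI[of p k "coeff f 0"] low j1 a0 by auto
  then have vk: "v (coeff g 0) + v (coeff h 0) = k" using vmult[OF b00 c00] c0 by simp
  have "wg tg \<le> wg 0" using tg2 b00 by auto
  moreover have "wh th \<le> wh 0" using th2 c00 by auto
  moreover have "wg 0 + wh 0 = j * k" unfolding wg_def wh_def using vk
    by (simp add: add_mult_distrib2[symmetric])
  ultimately have eqg: "wg tg = wg 0" and eqh: "wh th = wh 0" using lower by linarith+
  have copj: "coprime j k" using cop by (simp add: coprime_commute)
  have tgc: "tg = 0 \<or> j \<le> tg"
  proof -
    have e: "k * tg = j * v (coeff g 0) - j * v (coeff g tg)"
      using eqg unfolding wg_def by simp
    have "j dvd k * tg" unfolding e by (intro dvd_diff_nat) auto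
    then have "j dvd tg" using coprime_dvd_mult_right_iff[OF copj] by simp
    then show ?thesis using dvd_imp_le by blast
  qed
  have thc: "th = 0 \<or> j \<le> th"
  proof -
    have e: "k * th = j * v (coeff h 0) - j * v (coeff h th)"
      using eqh unfolding wh_def by simp
    have "j dvd k * th" unfolding e by (intro dvd_diff_nat) auto
    then have "j dvd th" using coprime_dvd_mult_right_iff[OF copj] by simp
    then show ?thesis using dvd_imp_le by blast
  qed
  show ?thesis
  proof (cases "j \<le> tg \<or> j \<le> th")
    case True
    have "tg \<le> degree g" using tg1 by (rule le_degree)
    moreover have "th \<le> degree h" using th1 by (rule le_degree)
    ultimately show ?thesis using True by linarith
  next
    case False
    then have z: "tg = 0" "th = 0" using tgc thc by auto
    have "p dvd coeff f j"
    proof -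
      have cf: "coeff f j = (\<Sum>a\<le>j. coeff g a * coeff h (j - a))"
        using fgh by (simp add: coeff_mult)
      have "p ^ 1 dvd (\<Sum>a\<le>j. coeff g a * coeff h (j - a))"
      proof (rule dvd_sum)
        fix a assume a: "a \<in> {..j}"
        show "p ^ 1 dvd coeff g a * coeff h (j - a)"
        proof (cases "coeff g a = 0 \<or> coeff h (j - a) = 0")
          case True then show ?thesis by auto
        next
          case False
          have "tg < a \<or> th < j - a" using a z j1 by auto
          then have "wg 0 + wh 0 < wg a + wh (j - a)" using strict False z by auto
          moreover have "k * a + k * (j - a) = k * j"
            using a by (simp add: add_mult_distrib2[symmetric])
          moreover have "j * v (coeff g 0) + j * v (coeff h 0) = j * k"
            using vk by (simp add: add_mult_distrib2[symmetric])
          ultimately have "j * k < j * v (coeff g a) + j * v (coeff h (j - a)) + k * j"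
            unfolding wg_def wh_def by linarith
          then have "0 < j * v (coeff g a) + j * v (coeff h (j - a))"
            by (simp add: mult.commute)
          then have "1 \<le> v (coeff g a) + v (coeff h (j - a))" by auto
          then show ?thesis by (rule div)
        qed
      qed
      then show ?thesis using cf by simp
    qed
    then show ?thesis using aj by blast
  qed
qed

lemma map_of_int_add:
  "map_poly (of_int :: int \<Rightarrow> 'a::comm_ring_1) (p + q) = map_poly of_int p + map_poly of_int q"
  by (intro poly_eqI) (simp add: coeff_map_poly)

lemma map_of_int_mult:
  "map_poly (of_int :: int \<Rightarrow> 'a::comm_ring_1) (p * q) = map_poly of_int p * map_poly of_int q"
proof (induction p)
  case 0 then show ?case by simp
next
  case (pCons a p)
  have "map_poly (of_int :: int \<Rightarrow> 'a) (pCons a p * q)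
      = map_poly of_int (smult a q) + map_poly of_int (pCons 0 (p * q))"
    by (simp add: map_of_int_add)
  also have "\<dots> = smult (of_int a) (map_poly of_int q) + pCons 0 (map_poly of_int p * map_poly of_int q)"
    using pCons.IH by (simp add: map_poly_smult map_poly_pCons)
  also have "\<dots> = map_poly of_int (pCons a p) * map_poly of_int q"
    by (simp add: map_poly_pCons)
  finally show ?case .
qed

theorem theorem1:
  fixes f :: "int poly" and m j k :: nat and p :: int
  assumes "m \<ge> 1"
    and "degree f = m"
    and "coeff f m \<noteq> 0"
    and "prime p"
    and "k > 0" and "coprime k j"
    and "1 \<le> j" and "j \<le> m"
    and "\<not> p dvd coeff f j"
    and "\<forall>i<j. p ^ k dvd coeff f i"
    and "\<not> p ^ (k + 1) dvd coeff f 0"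
  shows "(\<forall>g h :: int poly. f = g * h \<longrightarrow> min (degree g) (degree h) \<le> m - j)
    \<and> (content f = 1 \<and> j = m \<longrightarrow> irreducible f)
    \<and> (content f = 1 \<and> j = m - 1 \<and> (\<forall>x::rat. poly (map_poly of_int f) x \<noteq> 0)
         \<longrightarrow> irreducible f)"
proof -
  have f0: "f \<noteq> 0" using assms(3) by auto
  have P1: "min (degree g) (degree h) \<le> m - j" if fgh: "f = g * h" for g h :: "int poly"
  proof -
    have "g \<noteq> 0" "h \<noteq> 0" using f0 fgh by auto
    then have dg: "degree g + degree h = m" using fgh assms(2) by (simp add: degree_mult_eq)
    show ?thesis using part1[OF fgh f0 assms(4,5,6,7,9,10,11)] dg by auto
  qed
  have const: "is_unit g" if cgh: "content f = 1" "f = g * h" "degree g = 0" for g h :: "int poly"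
  proof -
    obtain c where c: "g = [:c:]" using degree0_coeffs[OF cgh(3)] by blast
    have "content f = normalize c * content h" using cgh(2) c by (simp add: content_mult)
    then have "normalize c dvd 1" using cgh(1) by (metis dvd_triv_left)
    then have "c dvd 1" by simp
    then show ?thesis using c by (simp add: is_unit_const_poly_iff)
  qed
  have nunit: "\<not> is_unit f" using assms(1,2) by (auto simp: is_unit_poly_iff)
  have irr: "irreducible f" if cf: "content f = 1"
    and H: "\<And>g h. f = g * h \<Longrightarrow> degree g = 0 \<or> degree h = 0" for dummy :: nat
  proof (rule irreducibleI)
    show "f \<noteq> 0" by (rule f0)
    show "\<not> is_unit f" by (rule nunit)
    fix a b assume ab: "f = a * b"
    show "is_unit a \<or> is_unit b"
    proof (cases "degree a = 0")
      case True then show ?thesis using const[OF cf ab] by auto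
    next
      case False
      then have "degree b = 0" using H[OF ab] by simp
      moreover have "f = b * a" using ab by (simp add: mult.commute)
      ultimately show ?thesis using const[OF cf] by auto
    qed
  qed
  have P2: "irreducible f" if "content f = 1" "j = m"
  proof (rule irr[OF that(1)])
    fix g h assume "f = g * h"
    then have "min (degree g) (degree h) = 0" using P1 that(2) by fastforce
    then show "degree g = 0 \<or> degree h = 0" by (simp add: min_def split: if_splits)
  qed
  have P3: "irreducible f" if cf: "content f = 1" "j = m - 1"
    and nr: "\<forall>x::rat. poly (map_poly of_int f) x \<noteq> 0"
  proof (rule irr[OF cf(1)])
    fix g h assume fgh: "f = g * h"
    have noroot: False if "degree g = 1" "f = g * h" for g h :: "int poly"
    proof -
      define b0 where "b0 = coeff g 0"
      define b1 where "b1 = coeff g 1"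
      have gnz: "g \<noteq> 0" using that(1) by auto
      have "b1 = lead_coeff g" unfolding b1_def using that(1) by simp
      then have b1: "b1 \<noteq> 0" using gnz by simp
      have gg: "g = [:b0, b1:]"
      proof (rule poly_eqI)
        fix i show "coeff g i = coeff [:b0, b1:] i"
        proof (cases i)
          case 0 then show ?thesis by (simp add: b0_def)
        next
          case (Suc i') show ?thesis
          proof (cases i')
            case 0 then show ?thesis using Suc by (simp add: b1_def)
          next
            case (Suc i'') then show ?thesis using \<open>i = Suc i'\<close> that(1)
              by (simp add: coeff_eq_0)
          qed
        qed
      qed
      define x :: rat where "x = - of_int b0 / of_int b1"
      have "poly (map_poly of_int g) x = 0" unfolding gg x_def using b1 by (simp add: map_poly_pCons field_simps)
      moreover have "map_poly (of_int :: int \<Rightarrow> rat) f = map_poly of_int g * map_poly of_int h"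
        using that(2) by (simp add: map_of_int_mult)
      ultimately have "poly (map_poly of_int f) x = 0" by simp
      then show False using nr by auto
    qed
    have "min (degree g) (degree h) \<le> 1" using P1[OF fgh] cf(2) by simp
    moreover have "degree g \<noteq> 1" using noroot[of g h] fgh by blast
    moreover have "degree h \<noteq> 1" using noroot[of h g, OF _ fgh[unfolded mult.commute[of g h]]] by blast
    ultimately show "degree g = 0 \<or> degree h = 0" by (auto simp: min_def split: if_splits)
  qed
  show ?thesis using P1 P2 P3 by blast
qed

end
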